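(* Let $K$ be a finite simplicial complex, $n$ a positive integer, $\sigma_1,\ldots,\sigma_m$ the $(n+1)$-simplices of $K$, and $f$ a generic injective filtration function on $K$. Let $\alpha$ be an $n$-cycle whose class $[\alpha]\in H_n(K^f_a)$ is born at $a$ and terminated at a finite value $b>a$, let $D=(0,\frac{b-a}{2}]$, and let $\Sigma_\varepsilon$ ($\varepsilon\in D$) be as in the context. Assume $|\Sigma_x|\ge 2$ for some $x\in D$. Let $t_0=\max\{x\in D: |\Sigma_x|=1\}$ and write $\Sigma_{t_0}=\{\Delta_1\}$. Then there exist indices $i,j$ with $f(\sigma_j)-t_0=f(\sigma_i)+t_0$. Choose $t\in D$, $t>t_0$, such that $|\Sigma_t|=\lim_{x\searrow t_0}|\Sigma_x|$. Then: (1) $\Delta_1\in\{\sigma_i,\sigma_j\}$; (2) for every $s<t_0$, $\Delta_1$ is a maximal simplex of $K^f_{f(\Delta_1)+2s}$ (i.e. it is not a proper face of any simplex of $K^f_{f(\Delta_1)+2s}$); (3) if $\Delta_1=\sigma_j$, then $\{\sigma_i,\sigma_j\}\subseteq\Sigma_t$ and $\sigma_i$ is a terminal simplex in $K^f$ (it terminates a nontrivial homology class); (4) if $\Delta_1=\sigma_i$, then $\{\sigma_i,\sigma_j\}\subseteq\Sigma_t$ and $\sigma_j$ is a birth simplex in $K^f$ (it creates a nontrivial homology class).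
   Context: A filtration function on a finite simplicial complex $K$ is a map $f\colon K\to\mathbb{R}$ with $f(\sigma)\le f(\tau)$ whenever $\sigma$ is a face of $\tau$. An injective filtration function $f$ is generic if $|f(\sigma_i)-f(\sigma_j)|=|f(\sigma_{i'})-f(\sigma_{j'})|$ with $i\ne j$, $i'\ne j'$ implies $\{i,j\}=\{i',j'\}$. Sublevel complexes are $K^f_r=f^{-1}((-\infty,r])$; homology is with coefficients in a fixed field. For a nontrivial class $[\alpha]\in H_n(K^f_r)$, its birth is the infimum of $q\le r$ such that $[\alpha]$ is in the image of $H_n(K^f_q)\to H_n(K^f_r)$, and its termination scale is the infimum of $q\ge r$ such that $[\alpha]$ maps to $0$ in $H_n(K^f_q)$. Since $f$ is injective, each simplex $\sigma$ either is a birth simplex (adding it to $K^f_{<f(\sigma)}$ creates a new nontrivial homology class, i.e. $\partial\sigma$ is already a boundary there) or a terminal simplex (adding it makes a nontrivial homology class trivial). $\|f-g\|_\infty=\max_{\sigma\in K}|f(\sigma)-g(\sigma)|$. An injective $\varepsilon$-perturbation of $f$ is an injective filtration function $g$ with $\|f-g\|_\infty\le\varepsilon$. For such $g$, $\Delta_{g,\alpha}$ is the simplex $\tau$ such that $\alpha$ is a boundary in $K^g_{g(\tau)}$ but not in $K^g_r$ for $r<g(\tau)$, and $\Sigma_\varepsilon=\{\Delta_{g,\alpha}: g\text{ an injective }\varepsilon\text{-perturbation of }f\}$. *)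

theory Defs
  imports "HOL-Analysis.Analysis"
begin

text \<open>Finite simplicial complexes: a simplex is a nonempty finite set of vertices;
  vertices carry a linear order used to orient simplices.\<close>

definition simplicial_complex :: "'v set set \<Rightarrow> bool" where
  "simplicial_complex K \<longleftrightarrow> finite K \<and>
     (\<forall>\<sigma>\<in>K. finite \<sigma> \<and> \<sigma> \<noteq> {}) \<and>
     (\<forall>\<sigma>\<in>K. \<forall>\<tau>. \<tau> \<subseteq> \<sigma> \<and> \<tau> \<noteq> {} \<longrightarrow> \<tau> \<in> K)"

text \<open>Simplicial k-chains with field coefficients supported in a subcomplex L
  (a k-simplex has k+1 vertices).\<close>

definition chains :: "'v set set \<Rightarrow> nat \<Rightarrow> ('v set \<Rightarrow> 'k::field) set" where
  "chains L k = {c. \<forall>\<sigma>. c \<sigma> \<noteq> 0 \<longrightarrow> \<sigma> \<in> L \<and> card \<sigma> = Suc k}"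

definition bd :: "'v::linorder set set \<Rightarrow> ('v set \<Rightarrow> 'k::field) \<Rightarrow> 'v set \<Rightarrow> 'k" where
  "bd K c \<tau> = (\<Sum>\<sigma>\<in>{\<sigma>\<in>K. \<tau> \<subseteq> \<sigma> \<and> card \<sigma> = Suc (card \<tau>)}.
                  \<Sum>v\<in>\<sigma> - \<tau>. (-1) ^ card {u\<in>\<sigma>. u < v} * c \<sigma>)"

definition elem_chain :: "'v set \<Rightarrow> 'v set \<Rightarrow> 'k::field" where
  "elem_chain \<sigma> = (\<lambda>\<tau>. if \<tau> = \<sigma> then 1 else 0)"

definition is_boundary :: "'v::linorder set set \<Rightarrow> 'v set set \<Rightarrow> nat \<Rightarrow> ('v set \<Rightarrow> 'k::field) \<Rightarrow> bool" where
  "is_boundary K L k c \<longleftrightarrow> (\<exists>d \<in> chains L (Suc k). bd K d = c)"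

definition is_cycle :: "'v::linorder set set \<Rightarrow> 'v set set \<Rightarrow> nat \<Rightarrow> ('v set \<Rightarrow> 'k::field) \<Rightarrow> bool" where
  "is_cycle K L k c \<longleftrightarrow> c \<in> chains L k \<and> bd K c = (\<lambda>_. 0)"

definition filtration :: "'v set set \<Rightarrow> ('v set \<Rightarrow> real) \<Rightarrow> bool" where
  "filtration K f \<longleftrightarrow> (\<forall>\<sigma>\<in>K. \<forall>\<tau>\<in>K. \<sigma> \<subseteq> \<tau> \<longrightarrow> f \<sigma> \<le> f \<tau>)"

definition injective_filtration :: "'v set set \<Rightarrow> ('v set \<Rightarrow> real) \<Rightarrow> bool" where
  "injective_filtration K f \<longleftrightarrow> filtration K f \<and> inj_on f K"

definition generic :: "'v set set \<Rightarrow> ('v set \<Rightarrow> real) \<Rightarrow> bool" where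
  "generic K f \<longleftrightarrow> injective_filtration K f \<and>
     (\<forall>s1\<in>K. \<forall>s2\<in>K. \<forall>s3\<in>K. \<forall>s4\<in>K. s1 \<noteq> s2 \<longrightarrow> s3 \<noteq> s4 \<longrightarrow>
        \<bar>f s1 - f s2\<bar> = \<bar>f s3 - f s4\<bar> \<longrightarrow> {s1, s2} = {s3, s4})"

definition sublevel :: "'v set set \<Rightarrow> ('v set \<Rightarrow> real) \<Rightarrow> real \<Rightarrow> 'v set set" where
  "sublevel K f r = {\<sigma>\<in>K. f \<sigma> \<le> r}"

definition strict_sublevel :: "'v set set \<Rightarrow> ('v set \<Rightarrow> real) \<Rightarrow> real \<Rightarrow> 'v set set" where
  "strict_sublevel K f r = {\<sigma>\<in>K. f \<sigma> < r}"

definition born_at :: "'v::linorder set set \<Rightarrow> ('v set \<Rightarrow> real) \<Rightarrow> nat \<Rightarrow> ('v set \<Rightarrow> 'k::field) \<Rightarrow> real \<Rightarrow> real \<Rightarrow> bool" where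
  "born_at K f n \<alpha> r a \<longleftrightarrow>
     a = Inf {q. q \<le> r \<and> (\<exists>\<alpha>'. is_cycle K (sublevel K f q) n \<alpha>' \<and>
                         is_boundary K (sublevel K f r) n (\<lambda>\<sigma>. \<alpha> \<sigma> - \<alpha>' \<sigma>))}"

definition terminated_at :: "'v::linorder set set \<Rightarrow> ('v set \<Rightarrow> real) \<Rightarrow> nat \<Rightarrow> ('v set \<Rightarrow> 'k::field) \<Rightarrow> real \<Rightarrow> real \<Rightarrow> bool" where
  "terminated_at K f n \<alpha> r b \<longleftrightarrow>
     (let S = {q. q \<ge> r \<and> is_boundary K (sublevel K f q) n \<alpha>} in S \<noteq> {} \<and> b = Inf S)"

definition birth_simplex :: "'v::linorder set set \<Rightarrow> ('v set \<Rightarrow> real) \<Rightarrow> 'k::field itself \<Rightarrow> 'v set \<Rightarrow> bool" where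
  "birth_simplex K f (_::'k itself) \<sigma> \<longleftrightarrow> \<sigma> \<in> K \<and>
     is_boundary K (strict_sublevel K f (f \<sigma>)) (card \<sigma> - 2) (bd K (elem_chain \<sigma> :: 'v set \<Rightarrow> 'k))"

definition terminal_simplex :: "'v::linorder set set \<Rightarrow> ('v set \<Rightarrow> real) \<Rightarrow> 'k::field itself \<Rightarrow> 'v set \<Rightarrow> bool" where
  "terminal_simplex K f (_::'k itself) \<sigma> \<longleftrightarrow> \<sigma> \<in> K \<and>
     (\<exists>z :: 'v set \<Rightarrow> 'k.
        is_cycle K (strict_sublevel K f (f \<sigma>)) (card \<sigma> - 2) z \<and>
        \<not> is_boundary K (strict_sublevel K f (f \<sigma>)) (card \<sigma> - 2) z \<and>
        is_boundary K (insert \<sigma> (strict_sublevel K f (f \<sigma>))) (card \<sigma> - 2) z)"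

definition inj_perturbation :: "'v set set \<Rightarrow> ('v set \<Rightarrow> real) \<Rightarrow> real \<Rightarrow> ('v set \<Rightarrow> real) \<Rightarrow> bool" where
  "inj_perturbation K f \<epsilon> g \<longleftrightarrow> injective_filtration K g \<and> (\<forall>\<sigma>\<in>K. \<bar>f \<sigma> - g \<sigma>\<bar> \<le> \<epsilon>)"

definition Delta_set :: "'v::linorder set set \<Rightarrow> ('v set \<Rightarrow> real) \<Rightarrow> nat \<Rightarrow> ('v set \<Rightarrow> 'k::field) \<Rightarrow> real \<Rightarrow> 'v set set" where
  "Delta_set K f n \<alpha> \<epsilon> = {\<tau>. \<exists>g. inj_perturbation K f \<epsilon> g \<and> \<tau> \<in> K \<and>
      is_boundary K (sublevel K g (g \<tau>)) n \<alpha> \<and>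
      (\<forall>r < g \<tau>. \<not> is_boundary K (sublevel K g r) n \<alpha>)}"

end

theory Submission imports Defs begin

lemma chains_mono: "L \<subseteq> L' \<Longrightarrow> Defs.chains L k \<subseteq> Defs.chains L' k"
  unfolding chains_def by auto

lemma is_boundary_mono: "L \<subseteq> L' \<Longrightarrow> is_boundary K L n x \<Longrightarrow> is_boundary K L' n x"
  unfolding is_boundary_def using chains_mono by blast

lemma chains_cong: "(\<And>\<sigma>. card \<sigma> = Suc k \<Longrightarrow> (\<sigma> \<in> L \<longleftrightarrow> \<sigma> \<in> L')) \<Longrightarrow> Defs.chains L k = Defs.chains L' k"
  unfolding chains_def by auto

lemma is_boundary_cong: "(\<And>\<sigma>. card \<sigma> = Suc (Suc n) \<Longrightarrow> (\<sigma> \<in> L \<longleftrightarrow> \<sigma> \<in> L')) \<Longrightarrow>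
   is_boundary K L n x = is_boundary K L' n x"
proof -
  assume h: "\<And>\<sigma>. card \<sigma> = Suc (Suc n) \<Longrightarrow> (\<sigma> \<in> L \<longleftrightarrow> \<sigma> \<in> L')"
  have "Defs.chains L (Suc n) = (Defs.chains L' (Suc n) :: ('a set \<Rightarrow> 'b) set)"
    unfolding chains_def using h by blast
  then show ?thesis unfolding is_boundary_def by simp
qed

lemma bd_add: "bd K (\<lambda>x. c1 x + c2 x) = (\<lambda>x. bd K c1 x + bd K c2 x)"
  unfolding bd_def by (auto simp: distrib_left sum.distrib)

lemma bd_diff: "bd K (\<lambda>x. c1 x - c2 x) = (\<lambda>x. bd K c1 x - bd K c2 x)"
  unfolding bd_def by (auto simp: right_diff_distrib sum_subtractf)

lemma bd_scale: "bd K (\<lambda>x. k * c x) = (\<lambda>x. k * bd K c x)"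
  unfolding bd_def by (auto simp: sum_distrib_left mult.left_commute)

lemma bd_zero: "bd K (\<lambda>x. 0) = (\<lambda>x. 0)"
  unfolding bd_def by auto



lemma sub_max:
  fixes h :: "'a set \<Rightarrow> real"
  assumes "finite K" "S \<subseteq> K" "S \<noteq> {}"
  shows "\<exists>m\<in>S. S \<subseteq> sublevel K h (h m)"
proof -
  have fin: "finite (h ` S)" using assms finite_subset by blast
  have ne: "h ` S \<noteq> {}" using assms by auto
  obtain m where m: "m \<in> S" "h m = Max (h ` S)" using Max_in[OF fin ne] by auto
  have "\<forall>s\<in>S. h s \<le> h m" using m Max_ge[OF fin] by auto
  then show ?thesis using m assms unfolding sublevel_def by blast
qed

lemma strict_le:
  fixes h :: "'a set \<Rightarrow> real"
  assumes "finite K" "\<not> P {}" "\<forall>S S'. S \<subseteq> S' \<longrightarrow> P S \<longrightarrow> P S'"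
    "P (strict_sublevel K h c)"
  shows "\<exists>r<c. P (sublevel K h r)"
proof -
  let ?S = "strict_sublevel K h c"
  have ne: "?S \<noteq> {}" using assms(2,4) by fastforce
  have sub: "?S \<subseteq> K" unfolding strict_sublevel_def by auto
  obtain m where m: "m \<in> ?S" "?S \<subseteq> sublevel K h (h m)" using sub_max[OF assms(1) sub ne] by blast
  have "h m < c" using m unfolding strict_sublevel_def by auto
  moreover have "P (sublevel K h (h m))" using assms(3)[rule_format, OF m(2) assms(4)] .
  ultimately show ?thesis by blast
qed

lemma crit:
  fixes h :: "'a set \<Rightarrow> real"
  assumes fin: "finite K" and e: "\<not> P {}" and mono: "\<forall>S S'. S \<subseteq> S' \<longrightarrow> P S \<longrightarrow> P S'"
    and r: "P (sublevel K h r)"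
  shows "\<exists>\<tau>\<in>K. P (sublevel K h (h \<tau>)) \<and> (\<forall>r'<h \<tau>. \<not> P (sublevel K h r'))"
proof -
  define T where "T = {\<tau>\<in>K. P (sublevel K h (h \<tau>))}"
  have key: "\<exists>m\<in>T. h m \<le> r'" if "P (sublevel K h r')" for r'
  proof -
    have ne: "sublevel K h r' \<noteq> {}" using that e by auto
    have sub: "sublevel K h r' \<subseteq> K" unfolding sublevel_def by auto
    obtain m where m: "m \<in> sublevel K h r'" "sublevel K h r' \<subseteq> sublevel K h (h m)"
      using sub_max[OF fin sub ne] by blast
    have "m \<in> K" using m(1) unfolding sublevel_def by simp
    then have "m \<in> T" using mono[rule_format, OF m(2) that] unfolding T_def by simp
    moreover have "h m \<le> r'" using m unfolding sublevel_def by auto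
    ultimately show ?thesis by blast
  qed
  have finT: "finite (h ` T)" using fin unfolding T_def by auto
  have neT: "h ` T \<noteq> {}" using key[OF r] by auto
  obtain \<tau> where t: "\<tau> \<in> T" "h \<tau> = Min (h ` T)" using Min_in[OF finT neT] by auto
  have "\<forall>r'<h \<tau>. \<not> P (sublevel K h r')"
  proof (intro allI impI notI)
    fix r' assume "r' < h \<tau>" "P (sublevel K h r')"
    then obtain m where "m \<in> T" "h m \<le> r'" using key by blast
    then have "h \<tau> \<le> h m" using t Min_le[OF finT] by auto
    then show False using \<open>h m \<le> r'\<close> \<open>r' < h \<tau>\<close> by auto
  qed
  moreover have "\<tau> \<in> K" "P (sublevel K h (h \<tau>))" using t(1) unfolding T_def by simp_all
  ultimately show ?thesis by blast
qed

lemma crit_in_N: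
  fixes h :: "'a set \<Rightarrow> real"
  assumes fin: "finite K" and e: "\<not> P {}" and mono: "\<forall>S S'. S \<subseteq> S' \<longrightarrow> P S \<longrightarrow> P S'"
    and inj: "inj_on h K" and N: "\<And>S. P S \<Longrightarrow> P (S \<inter> N)"
    and t: "\<tau> \<in> K" "P (sublevel K h (h \<tau>))" "\<forall>r'<h \<tau>. \<not> P (sublevel K h r')"
  shows "\<tau> \<in> N"
proof (rule ccontr)
  assume nN: "\<tau> \<notin> N"
  have sub: "sublevel K h (h \<tau>) \<inter> N \<subseteq> strict_sublevel K h (h \<tau>)"
  proof
    fix s assume s: "s \<in> sublevel K h (h \<tau>) \<inter> N"
    then have "s \<noteq> \<tau>" using nN by auto
    then have "h s \<noteq> h \<tau>" using inj t(1) s unfolding sublevel_def inj_on_def by auto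
    then show "s \<in> strict_sublevel K h (h \<tau>)" using s unfolding sublevel_def strict_sublevel_def by auto
  qed
  have "P (sublevel K h (h \<tau>) \<inter> N)" using N t(2) .
  then have "P (strict_sublevel K h (h \<tau>))" using mono[rule_format, OF sub] by blast
  then have Ps: "P (strict_sublevel K h (h \<tau>))" .
  have ne: "strict_sublevel K h (h \<tau>) \<noteq> {}" using Ps e by fastforce
  have sub2: "strict_sublevel K h (h \<tau>) \<subseteq> K" unfolding strict_sublevel_def by auto
  obtain m where m: "m \<in> strict_sublevel K h (h \<tau>)"
     "strict_sublevel K h (h \<tau>) \<subseteq> sublevel K h (h m)" using sub_max[OF fin sub2 ne] by blast
  have "h m < h \<tau>" using m(1) unfolding strict_sublevel_def by simp
  moreover have "P (sublevel K h (h m))" using mono[rule_format, OF m(2) Ps] .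
  ultimately have "\<exists>r<h \<tau>. P (sublevel K h r)" by blast
  then obtain r where "r < h \<tau>" "P (sublevel K h r)" by blast
  then show False using t(3) by auto
qed


lemma bd_elem:
  assumes fin: "finite K"
  shows "bd K (elem_chain \<rho> :: 'v::linorder set \<Rightarrow> 'k::field) \<tau> =
    (if \<rho> \<in> K \<and> \<tau> \<subseteq> \<rho> \<and> card \<rho> = Suc (card \<tau>)
     then (\<Sum>v\<in>\<rho> - \<tau>. (-1) ^ card {u\<in>\<rho>. u < v}) else 0)"
proof -
  let ?S = "{\<sigma>\<in>K. \<tau> \<subseteq> \<sigma> \<and> card \<sigma> = Suc (card \<tau>)}"
  have finS: "finite ?S" using fin by auto
  have "bd K (elem_chain \<rho> :: 'v set \<Rightarrow> 'k) \<tau> =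
     (\<Sum>\<sigma>\<in>?S. if \<sigma> = \<rho> then (\<Sum>v\<in>\<sigma> - \<tau>. (-1) ^ card {u\<in>\<sigma>. u < v}) else (0::'k))"
    unfolding bd_def elem_chain_def by (rule sum.cong) auto
  also have "\<dots> = (if \<rho> \<in> ?S then (\<Sum>v\<in>\<rho> - \<tau>. (-1) ^ card {u\<in>\<rho>. u < v}) else 0)"
    using sum.delta'[OF finS] by (simp add: sum.delta finS)
  finally show ?thesis by auto
qed

lemma card_Suc_diff:
  assumes "finite \<rho>" "\<tau> \<subseteq> \<rho>" "card \<rho> = Suc (card \<tau>)"
  shows "\<exists>v. v \<notin> \<tau> \<and> \<rho> = insert v \<tau> \<and> \<rho> - \<tau> = {v}"
proof -
  have "card (\<rho> - \<tau>) = 1" using assms by (simp add: card_Diff_subset finite_subset)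
  then obtain v where v: "\<rho> - \<tau> = {v}" by (auto simp: card_1_singleton_iff)
  then show ?thesis using assms(2) by auto
qed

lemma bd_elem_face:
  assumes fin: "finite K" and r: "\<rho> \<in> K" "finite \<rho>" and v: "v \<notin> \<tau>" "\<rho> = insert v \<tau>"
  shows "bd K (elem_chain \<rho> :: 'v::linorder set \<Rightarrow> 'k::field) \<tau> = (-1) ^ card {u\<in>\<rho>. u < v}"
proof -
  have ft: "finite \<tau>" using r v by auto
  have "\<rho> - \<tau> = {v}" using v by auto
  moreover have "card \<rho> = Suc (card \<tau>)" using v ft by simp
  ultimately have "bd K (elem_chain \<rho> :: 'v set \<Rightarrow> 'k) \<tau> = (\<Sum>x\<in>{v}. (-1) ^ card {u\<in>\<rho>. u < x})"
    using bd_elem[OF fin, of \<rho> \<tau>] r v by (simp only: if_True subset_insertI simp_thms)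
  then show ?thesis by simp
qed


lemma sc_finite: "simplicial_complex K \<Longrightarrow> finite K"
  unfolding simplicial_complex_def by auto

lemma sc_simplex_finite: "simplicial_complex K \<Longrightarrow> \<sigma> \<in> K \<Longrightarrow> finite \<sigma>"
  unfolding simplicial_complex_def by auto

lemma sc_face: "simplicial_complex K \<Longrightarrow> \<sigma> \<in> K \<Longrightarrow> \<tau> \<subseteq> \<sigma> \<Longrightarrow> \<tau> \<noteq> {} \<Longrightarrow> \<tau> \<in> K"
  unfolding simplicial_complex_def by blast

lemma bd_bd_elem:
  assumes K: "simplicial_complex K" and r: "\<rho> \<in> K"
  shows "bd K (bd K (elem_chain \<rho> :: 'v::linorder set \<Rightarrow> 'k::field)) \<tau> = 0"
proof -
  have finK: "finite K" using sc_finite[OF K] .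
  have finr: "finite \<rho>" using sc_simplex_finite[OF K r] .
  let ?S = "{\<sigma>\<in>K. \<tau> \<subseteq> \<sigma> \<and> card \<sigma> = Suc (card \<tau>)}"
  define c where "c = bd K (elem_chain \<rho> :: 'v set \<Rightarrow> 'k)"
  have c: "c \<sigma> = (if \<rho> \<in> K \<and> \<sigma> \<subseteq> \<rho> \<and> card \<rho> = Suc (card \<sigma>)
     then (\<Sum>v\<in>\<rho> - \<sigma>. (-1) ^ card {u\<in>\<rho>. u < v}) else 0)" for \<sigma>
    unfolding c_def by (rule bd_elem[OF finK])
  have exp: "bd K c \<tau> = (\<Sum>\<sigma>\<in>?S. \<Sum>v\<in>\<sigma> - \<tau>. (-1) ^ card {u\<in>\<sigma>. u < v} * c \<sigma>)"
    unfolding bd_def by simp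
  show ?thesis
  proof (cases "\<tau> \<subseteq> \<rho> \<and> card \<rho> = Suc (Suc (card \<tau>))")
    case False
    have "c \<sigma> = 0" if "\<sigma> \<in> ?S" for \<sigma>
    proof -
      have "\<not> (\<sigma> \<subseteq> \<rho> \<and> card \<rho> = Suc (card \<sigma>))" using that False by auto
      then show ?thesis using c[of \<sigma>] by auto
    qed
    then have "bd K c \<tau> = 0" unfolding exp by simp
    then show ?thesis unfolding c_def .
  next
    case True
    have ft: "finite \<tau>" using True finr finite_subset by blast
    have "card (\<rho> - \<tau>) = 2" using True finr by (simp add: card_Diff_subset ft)
    then obtain x y where xy: "\<rho> - \<tau> = {x, y}" "x \<noteq> y" by (auto simp: card_2_iff)
    define v where "v = min x y"
    define w where "w = max x y"
    have vw: "\<rho> - \<tau> = {v, w}" "v < w" using xy unfolding v_def w_def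
      by (auto simp: min_def max_def)
    have vt: "v \<notin> \<tau>" "w \<notin> \<tau>" "v \<in> \<rho>" "w \<in> \<rho>" using vw(1) by auto
    define sv where "sv = insert v \<tau>"
    define sw where "sw = insert w \<tau>"
    have svK: "sv \<in> K" using sc_face[OF K r, of sv] vt True unfolding sv_def by auto
    have swK: "sw \<in> K" using sc_face[OF K r, of sw] vt True unfolding sw_def by auto
    have svS: "sv \<in> ?S" using svK vt ft unfolding sv_def by auto
    have swS: "sw \<in> ?S" using swK vt ft unfolding sw_def by auto
    have ne: "sv \<noteq> sw" using vt vw unfolding sv_def sw_def by auto
    have zero: "(\<Sum>v\<in>\<sigma> - \<tau>. (-1) ^ card {u\<in>\<sigma>. u < v} * c \<sigma>) = 0"
      if sS: "\<sigma> \<in> ?S - {sv, sw}" for \<sigma>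
    proof -
      have "c \<sigma> = 0"
      proof (rule ccontr)
        assume "c \<sigma> \<noteq> 0"
        then have sr: "\<sigma> \<subseteq> \<rho>" using c[of \<sigma>] by (auto split: if_splits)
        have "finite \<sigma>" using sr finr finite_subset by blast
        then obtain z where z: "z \<notin> \<tau>" "\<sigma> = insert z \<tau>" "\<sigma> - \<tau> = {z}"
          using card_Suc_diff[of \<sigma> \<tau>] sS by auto
        then have "z \<in> \<rho> - \<tau>" using sr by auto
        then have "z = v \<or> z = w" using vw by auto
        then show False using sS z unfolding sv_def sw_def by auto
      qed
      then show ?thesis by simp
    qed
    have "bd K c \<tau> = (\<Sum>\<sigma>\<in>{sv, sw}. \<Sum>v\<in>\<sigma> - \<tau>. (-1) ^ card {u\<in>\<sigma>. u < v} * c \<sigma>)"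
      unfolding exp
      by (rule sum.mono_neutral_right) (use finK svS swS zero in auto)
    also have "\<dots> = (\<Sum>v\<in>sv - \<tau>. (-1) ^ card {u\<in>sv. u < v} * c sv)
                   + (\<Sum>v\<in>sw - \<tau>. (-1) ^ card {u\<in>sw. u < v} * c sw)"
      using ne by simp
    also have "\<dots> = (-1) ^ card {u\<in>sv. u < v} * c sv + (-1) ^ card {u\<in>sw. u < w} * c sw"
    proof -
      have "sv - \<tau> = {v}" "sw - \<tau> = {w}" using vt unfolding sv_def sw_def by auto
      then show ?thesis by simp
    qed
    also have "\<dots> = 0"
    proof -
      have rv: "\<rho> = insert w sv" "\<rho> = insert v sw"
        using vw True unfolding sv_def sw_def by auto
      have fsv: "finite sv" "finite sw" using ft unfolding sv_def sw_def by auto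
      have wsv: "w \<notin> sv" "v \<notin> sw" using vt vw unfolding sv_def sw_def by auto
      have csv: "c sv = (-1) ^ card {u\<in>\<rho>. u < w}"
        unfolding c_def by (rule bd_elem_face[OF finK r finr wsv(1) rv(1)])
      have csw: "c sw = (-1) ^ card {u\<in>\<rho>. u < v}"
        unfolding c_def by (rule bd_elem_face[OF finK r finr wsv(2) rv(2)])
      have e1: "{u\<in>sv. u < v} = {u\<in>\<tau>. u < v}" unfolding sv_def by auto
      have e2: "{u\<in>sw. u < w} = {u\<in>\<tau>. u < w}" unfolding sw_def by auto
      have e3: "{u\<in>\<rho>. u < w} = insert v {u\<in>\<tau>. u < w}"
        using rv(1) vw(2) unfolding sv_def by auto
      have e4: "{u\<in>\<rho>. u < v} = {u\<in>\<tau>. u < v}"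
        using rv(1) vw(2) unfolding sv_def by auto
      have c3: "card {u\<in>\<rho>. u < w} = Suc (card {u\<in>\<tau>. u < w})"
        unfolding e3 using ft vt(1) by simp
      show ?thesis unfolding csv csw e1 e2 c3 e4 by simp
    qed
    finally show ?thesis unfolding c_def .
  qed
qed


lemma card_same_subset: "finite \<tau> \<Longrightarrow> \<sigma> \<subseteq> \<tau> \<Longrightarrow> card \<sigma> = card \<tau> \<Longrightarrow> \<sigma> = \<tau>"
  using card_subset_eq by blast

lemma avoid_finite:
  fixes l u :: real
  assumes "l < u" "finite E"
  shows "\<exists>e. l < e \<and> e \<le> u \<and> e \<notin> E"
proof -
  have "\<not> finite {l<..u}" using infinite_Ioc[OF assms(1)] .
  then have "{l<..u} - E \<noteq> {}" using assms(2) by (metis Diff_eq_empty_iff finite_subset)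
  then show ?thesis by auto
qed

lemma Delta_mono: "\<epsilon> \<le> \<epsilon>' \<Longrightarrow> Delta_set K f n \<alpha> \<epsilon> \<subseteq> Delta_set K f n \<alpha> \<epsilon>'"
  unfolding Delta_set_def inj_perturbation_def by force

lemma Delta_sub: "Delta_set K f n \<alpha> \<epsilon> \<subseteq> K"
  unfolding Delta_set_def by auto

locale PSetup =
  fixes K :: "'v::linorder set set" and f :: "'v set \<Rightarrow> real" and n :: nat
    and \<alpha> :: "'v set \<Rightarrow> 'k::field" and b :: real and sb :: "'v set"
  assumes K: "simplicial_complex K"
    and f: "injective_filtration K f"
    and sbK: "sb \<in> K" and sbc: "card sb = Suc (Suc n)" and fsb: "f sb = b"
    and bdyb: "is_boundary K (sublevel K f b) n \<alpha>"
    and notbefore: "\<forall>q<b. \<not> is_boundary K (sublevel K f q) n \<alpha>"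
begin

lemma finK: "finite K" using sc_finite[OF K] .
lemma inj: "inj_on f K" using f unfolding injective_filtration_def by auto
lemma filt: "\<sigma> \<in> K \<Longrightarrow> \<tau> \<in> K \<Longrightarrow> \<sigma> \<subseteq> \<tau> \<Longrightarrow> f \<sigma> \<le> f \<tau>"
  using f unfolding injective_filtration_def filtration_def by auto
lemma finS: "\<sigma> \<in> K \<Longrightarrow> finite \<sigma>" using sc_simplex_finite[OF K] .

lemma f_eq: "\<sigma> \<in> K \<Longrightarrow> \<tau> \<in> K \<Longrightarrow> f \<sigma> = f \<tau> \<Longrightarrow> \<sigma> = \<tau>"
  using inj unfolding inj_on_def by auto

lemma same_card_sb: "\<sigma> \<in> K \<Longrightarrow> card \<sigma> = Suc (Suc n) \<Longrightarrow> sb \<subseteq> \<sigma> \<Longrightarrow> \<sigma> = sb"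
  using card_same_subset[of \<sigma> sb] finS sbc by auto

lemma same_card_sb2: "\<sigma> \<in> K \<Longrightarrow> card \<sigma> = Suc (Suc n) \<Longrightarrow> \<sigma> \<subseteq> sb \<Longrightarrow> \<sigma> = sb"
  using card_same_subset[of sb \<sigma>] finS sbK sbc by auto

lemma P0_empty: "\<not> is_boundary K {} n \<alpha>"
proof
  assume "is_boundary K {} n \<alpha>"
  then have "is_boundary K (sublevel K f (b - 1)) n \<alpha>" using is_boundary_mono[of "{}"] by blast
  then show False using notbefore by auto
qed

lemma not_strict_b: "\<not> is_boundary K (strict_sublevel K f b) n \<alpha>"
proof
  assume h: "is_boundary K (strict_sublevel K f b) n \<alpha>"
  have "\<exists>r<b. is_boundary K (sublevel K f r) n \<alpha>"
    by (rule strict_le[where P="\<lambda>S. is_boundary K S n \<alpha>", OF finK P0_empty])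
       (auto intro: is_boundary_mono h)
  then show False using notbefore by auto
qed

lemma sb_Delta: "0 \<le> \<epsilon> \<Longrightarrow> sb \<in> Delta_set K f n \<alpha> \<epsilon>"
  unfolding Delta_set_def inj_perturbation_def
  using f sbK bdyb notbefore fsb by (intro CollectI exI[of _ f]) auto


lemma strict_contra:
  assumes mono: "\<forall>S S'. S \<subseteq> S' \<longrightarrow> P S \<longrightarrow> P S'" and e: "\<not> P {}"
    and min: "\<forall>r<c. \<not> P (sublevel K f r)" and h: "P (strict_sublevel K f c)"
  shows False
proof -
  have ne: "strict_sublevel K f c \<noteq> {}" using h e by fastforce
  have sub2: "strict_sublevel K f c \<subseteq> K" unfolding strict_sublevel_def by auto
  obtain m where m: "m \<in> strict_sublevel K f c"
     "strict_sublevel K f c \<subseteq> sublevel K f (f m)" using sub_max[OF finK sub2 ne] by blast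
  have "f m < c" using m(1) unfolding strict_sublevel_def by simp
  moreover have "P (sublevel K f (f m))" using mono[rule_format, OF m(2) h] .
  ultimately show False using min by blast
qed

lemma birth_side:
  assumes r: "is_boundary K (sublevel K f r - {sb}) n \<alpha>"
  shows "\<exists>\<rho>\<in>K. card \<rho> = Suc (Suc n) \<and> \<rho> \<noteq> sb \<and> b < f \<rho> \<and> f \<rho> \<le> r \<and>
     birth_simplex K f TYPE('k) \<rho> \<and> (\<forall>\<epsilon>. (f \<rho> - b) / 2 < \<epsilon> \<longrightarrow> \<rho> \<in> Delta_set K f n \<alpha> \<epsilon>)"
proof -
  define P where "P = (\<lambda>S. is_boundary K (S - {sb}) n \<alpha>)"
  have mono: "\<forall>S S'. S \<subseteq> S' \<longrightarrow> P S \<longrightarrow> P S'"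
    unfolding P_def
  proof (intro allI impI)
    fix S S' :: "'v set set" assume h: "S \<subseteq> S'" "is_boundary K (S - {sb}) n \<alpha>"
    have "S - {sb} \<subseteq> S' - {sb}" using h(1) by blast
    then show "is_boundary K (S' - {sb}) n \<alpha>" by (rule is_boundary_mono[OF _ h(2)])
  qed
  have Pe: "\<not> P {}" unfolding P_def using P0_empty by simp
  have PN: "P (S \<inter> {\<sigma>. card \<sigma> = Suc (Suc n)})" if "P S" for S
    using that unfolding P_def by (subst is_boundary_cong[where L'="S - {sb}"]) auto
  obtain \<rho> where \<rho>: "\<rho> \<in> K" "P (sublevel K f (f \<rho>))" "\<forall>r'<f \<rho>. \<not> P (sublevel K f r')"
    using crit[where P=P, OF finK Pe mono] r unfolding P_def by blast
  have cr: "card \<rho> = Suc (Suc n)"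
    using crit_in_N[where P=P and N="{\<sigma>. card \<sigma> = Suc (Suc n)}", OF finK Pe mono inj PN \<rho>] by simp
  have fr: "f \<rho> \<le> r"
  proof (rule ccontr)
    assume "\<not> f \<rho> \<le> r"
    then show False using \<rho>(3) r unfolding P_def by auto
  qed
  have bf: "b < f \<rho>"
  proof (rule ccontr)
    assume "\<not> b < f \<rho>"
    have "sublevel K f (f \<rho>) - {sb} \<subseteq> strict_sublevel K f b"
    proof
      fix \<sigma> assume s: "\<sigma> \<in> sublevel K f (f \<rho>) - {sb}"
      then have "f \<sigma> \<noteq> b" using f_eq[of \<sigma> sb] sbK fsb unfolding sublevel_def by auto
      then show "\<sigma> \<in> strict_sublevel K f b" using s \<open>\<not> b < f \<rho>\<close>
        unfolding sublevel_def strict_sublevel_def by auto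
    qed
    then have "is_boundary K (strict_sublevel K f b) n \<alpha>"
      using \<rho>(2) unfolding P_def by (rule is_boundary_mono)
    then show False using not_strict_b by simp
  qed
  have rsb: "\<rho> \<noteq> sb" using bf fsb by auto
  obtain c where c: "c \<in> chains (sublevel K f (f \<rho>) - {sb}) (Suc n)" "bd K c = \<alpha>"
    using \<rho>(2) unfolding P_def is_boundary_def by blast
  obtain c0 where c0: "c0 \<in> chains (sublevel K f b) (Suc n)" "bd K c0 = \<alpha>"
    using bdyb unfolding is_boundary_def by blast
  have lam: "c \<rho> \<noteq> 0"
  proof
    assume c\<rho>: "c \<rho> = 0"
    have "c \<in> chains (strict_sublevel K f (f \<rho>) - {sb}) (Suc n)"
      unfolding chains_def
    proof (intro CollectI allI impI)
      fix \<sigma> assume "c \<sigma> \<noteq> 0"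
      then have s: "\<sigma> \<in> sublevel K f (f \<rho>) - {sb}" "card \<sigma> = Suc (Suc n)" "\<sigma> \<noteq> \<rho>"
        using c(1) c\<rho> unfolding chains_def by auto
      then have "f \<sigma> \<noteq> f \<rho>" using f_eq[of \<sigma> \<rho>] \<rho>(1) unfolding sublevel_def by auto
      then show "\<sigma> \<in> strict_sublevel K f (f \<rho>) - {sb} \<and> card \<sigma> = Suc (Suc n)"
        using s unfolding sublevel_def strict_sublevel_def by auto
    qed
    then have "P (strict_sublevel K f (f \<rho>))" using c(2) unfolding P_def is_boundary_def by blast
    then show False using strict_contra[where P=P, OF mono Pe \<rho>(3)] by blast
  qed
  have birth: "birth_simplex K f TYPE('k) \<rho>"
  proof -
    define l where "l = c \<rho>"
    define d where "d = (\<lambda>x. inverse l * (c0 x - (c x - l * elem_chain \<rho> x)))"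
    have "bd K d = (\<lambda>x. inverse l * (bd K c0 x - (bd K c x - l * bd K (elem_chain \<rho>) x)))"
      unfolding d_def bd_scale bd_diff by simp
    also have "\<dots> = bd K (elem_chain \<rho>)" using lam unfolding c(2) c0(2) l_def by (simp add: field_simps)
    finally have bdd: "bd K d = bd K (elem_chain \<rho>)" .
    have "d \<in> chains (strict_sublevel K f (f \<rho>)) (Suc n)"
      unfolding chains_def
    proof (intro CollectI allI impI)
      fix \<sigma> assume d\<sigma>: "d \<sigma> \<noteq> 0"
      show "\<sigma> \<in> strict_sublevel K f (f \<rho>) \<and> card \<sigma> = Suc (Suc n)"
      proof (cases "c0 \<sigma> = 0")
        case False
        then have "\<sigma> \<in> sublevel K f b" "card \<sigma> = Suc (Suc n)" using c0(1) unfolding chains_def by auto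
        then show ?thesis using bf unfolding sublevel_def strict_sublevel_def by auto
      next
        case True
        then have "c \<sigma> - l * elem_chain \<rho> \<sigma> \<noteq> 0" using d\<sigma> unfolding d_def by auto
        then have ne: "\<sigma> \<noteq> \<rho>" "c \<sigma> \<noteq> 0" unfolding l_def elem_chain_def by (auto split: if_splits)
        then have s: "\<sigma> \<in> sublevel K f (f \<rho>)" "card \<sigma> = Suc (Suc n)" using c(1) unfolding chains_def by auto
        then have "f \<sigma> \<noteq> f \<rho>" using f_eq[of \<sigma> \<rho>] \<rho>(1) ne unfolding sublevel_def by auto
        then show ?thesis using s unfolding sublevel_def strict_sublevel_def by auto
      qed
    qed
    then show ?thesis unfolding birth_simplex_def is_boundary_def using \<rho>(1) cr bdd by auto
  qed
  have switch: "\<rho> \<in> Delta_set K f n \<alpha> \<epsilon>" if \<epsilon>: "(f \<rho> - b) / 2 < \<epsilon>" for \<epsilon>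
  proof -
    define E where "E = (\<lambda>(x, y). (f x - f y) / 2) ` (K \<times> K)"
    have "finite E" unfolding E_def using finK by auto
    then obtain e where e: "(f \<rho> - b) / 2 < e" "e \<le> \<epsilon>" "e \<notin> E" using avoid_finite[OF \<epsilon>] by blast
    have e0: "0 < e" using e bf by auto
    define g where "g = (\<lambda>\<tau>. if sb \<subseteq> \<tau> then f \<tau> + e else f \<tau> - e)"
    have gfilt: "filtration K g"
      unfolding filtration_def g_def using filt e0 by fastforce
    have ginj: "inj_on g K"
    proof (rule inj_onI)
      fix x y assume xy: "x \<in> K" "y \<in> K" "g x = g y"
      show "x = y"
      proof (cases "sb \<subseteq> x \<longleftrightarrow> sb \<subseteq> y")
        case True
        then have "f x = f y" using xy(3) unfolding g_def by (auto split: if_splits)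
        then show ?thesis using f_eq xy by auto
      next
        case False
        then have "e = (f y - f x) / 2 \<or> e = (f x - f y) / 2" using xy(3) unfolding g_def
          by (auto split: if_splits)
        then have "e \<in> E" unfolding E_def
        proof
          assume "e = (f y - f x) / 2"
          then show "e \<in> (\<lambda>(x, y). (f x - f y) / 2) ` (K \<times> K)"
            using xy by (intro rev_image_eqI[of "(y, x)"]) auto
        next
          assume "e = (f x - f y) / 2"
          then show "e \<in> (\<lambda>(x, y). (f x - f y) / 2) ` (K \<times> K)"
            using xy by (intro rev_image_eqI[of "(x, y)"]) auto
        qed
        then show ?thesis using e by auto
      qed
    qed
    have pert: "inj_perturbation K f \<epsilon> g"
      unfolding inj_perturbation_def injective_filtration_def g_def using gfilt ginj e e0
      unfolding g_def by auto
    have g\<rho>: "g \<rho> = f \<rho> - e" using same_card_sb[OF \<rho>(1) cr] rsb unfolding g_def by auto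
    have gN: "g \<sigma> = f \<sigma> - e" if "\<sigma> \<in> K" "card \<sigma> = Suc (Suc n)" "\<sigma> \<noteq> sb" for \<sigma>
      using same_card_sb[OF that(1,2)] that(3) unfolding g_def by auto
    have B1: "is_boundary K (sublevel K g (g \<rho>)) n \<alpha>"
    proof -
      have "is_boundary K ((sublevel K f (f \<rho>) - {sb}) \<inter> {\<sigma>. card \<sigma> = Suc (Suc n)}) n \<alpha>"
        using \<rho>(2) unfolding P_def by (subst is_boundary_cong[where L'="sublevel K f (f \<rho>) - {sb}"]) auto
      moreover have "(sublevel K f (f \<rho>) - {sb}) \<inter> {\<sigma>. card \<sigma> = Suc (Suc n)} \<subseteq> sublevel K g (g \<rho>)"
      proof
        fix \<sigma> assume s: "\<sigma> \<in> (sublevel K f (f \<rho>) - {sb}) \<inter> {\<sigma>. card \<sigma> = Suc (Suc n)}"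
        then have "g \<sigma> = f \<sigma> - e" using gN unfolding sublevel_def by blast
        then show "\<sigma> \<in> sublevel K g (g \<rho>)" using s g\<rho> unfolding sublevel_def by auto
      qed
      ultimately show ?thesis by (rule is_boundary_mono[rotated])
    qed
    have B2: "\<not> is_boundary K (sublevel K g r) n \<alpha>" if rr: "r < g \<rho>" for r
    proof
      assume h: "is_boundary K (sublevel K g r) n \<alpha>"
      have "sublevel K g r \<inter> {\<sigma>. card \<sigma> = Suc (Suc n)} \<subseteq> strict_sublevel K f (f \<rho>) - {sb}"
      proof
        fix \<sigma> assume s: "\<sigma> \<in> sublevel K g r \<inter> {\<sigma>. card \<sigma> = Suc (Suc n)}"
        have "\<sigma> \<noteq> sb"
        proof
          assume "\<sigma> = sb"
          then have "b + e \<le> r" using s fsb unfolding sublevel_def g_def by auto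
          then show False using rr g\<rho> e(1) by auto
        qed
        then show "\<sigma> \<in> strict_sublevel K f (f \<rho>) - {sb}"
          using s gN[of \<sigma>] rr g\<rho> unfolding sublevel_def strict_sublevel_def by auto
      qed
      moreover have "is_boundary K (sublevel K g r \<inter> {\<sigma>. card \<sigma> = Suc (Suc n)}) n \<alpha>"
        using h by (subst is_boundary_cong[where L'="sublevel K g r"]) auto
      ultimately have "P (strict_sublevel K f (f \<rho>))" unfolding P_def
        by (rule is_boundary_mono)
      then show False using strict_contra[where P=P, OF mono Pe \<rho>(3)] by blast
    qed
    show ?thesis unfolding Delta_set_def using pert \<rho>(1) B1 B2 by blast
  qed
  show ?thesis using \<rho>(1) cr rsb bf fr birth switch by blast
qed


lemma term_side:
  assumes nsb: "\<not> is_boundary K {sb} n \<alpha>"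
  shows "\<exists>\<rho>\<in>K. card \<rho> = Suc (Suc n) \<and> \<rho> \<noteq> sb \<and> f \<rho> < b \<and>
     is_boundary K (insert sb (sublevel K f (f \<rho>))) n \<alpha> \<and>
     terminal_simplex K f TYPE('k) \<rho> \<and> (\<forall>\<epsilon>. (b - f \<rho>) / 2 < \<epsilon> \<longrightarrow> \<rho> \<in> Delta_set K f n \<alpha> \<epsilon>)"
proof -
  define P where "P = (\<lambda>S. is_boundary K (insert sb S) n \<alpha>)"
  have mono: "\<forall>S S'. S \<subseteq> S' \<longrightarrow> P S \<longrightarrow> P S'"
    unfolding P_def
  proof (intro allI impI)
    fix S S' :: "'v set set" assume h: "S \<subseteq> S'" "is_boundary K (insert sb S) n \<alpha>"
    have "insert sb S \<subseteq> insert sb S'" using h(1) by blast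
    then show "is_boundary K (insert sb S') n \<alpha>" by (rule is_boundary_mono[OF _ h(2)])
  qed
  have Pe: "\<not> P {}" unfolding P_def using nsb by simp
  have PN: "P (S \<inter> {\<sigma>. card \<sigma> = Suc (Suc n)})" if "P S" for S
    using that sbc unfolding P_def by (subst is_boundary_cong[where L'="insert sb S"]) auto
  have Pb: "P (sublevel K f b)" unfolding P_def
  proof -
    have "insert sb (sublevel K f b) = sublevel K f b" using sbK fsb unfolding sublevel_def by auto
    then show "is_boundary K (insert sb (sublevel K f b)) n \<alpha>" using bdyb by simp
  qed
  obtain \<rho> where \<rho>: "\<rho> \<in> K" "P (sublevel K f (f \<rho>))" "\<forall>r'<f \<rho>. \<not> P (sublevel K f r')"
    using crit[where P=P, OF finK Pe mono Pb] by blast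
  have cr: "card \<rho> = Suc (Suc n)"
    using crit_in_N[where P=P and N="{\<sigma>. card \<sigma> = Suc (Suc n)}", OF finK Pe mono inj PN \<rho>] by simp
  have fr: "f \<rho> \<le> b"
  proof (rule ccontr)
    assume "\<not> f \<rho> \<le> b"
    then show False using \<rho>(3) Pb by auto
  qed
  have strictP: "\<not> P (strict_sublevel K f (f \<rho>))"
    using strict_contra[where P=P, OF mono Pe \<rho>(3)] by blast
  have rsb: "\<rho> \<noteq> sb"
  proof
    assume "\<rho> = sb"
    have "sublevel K f (f \<rho>) \<subseteq> insert sb (strict_sublevel K f (f \<rho>))"
    proof
      fix \<sigma> assume s: "\<sigma> \<in> sublevel K f (f \<rho>)"
      show "\<sigma> \<in> insert sb (strict_sublevel K f (f \<rho>))"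
      proof (cases "\<sigma> = sb")
        case False
        then have "f \<sigma> \<noteq> f sb" using f_eq[of \<sigma> sb] sbK s unfolding sublevel_def by auto
        then show ?thesis using s \<open>\<rho> = sb\<close> unfolding sublevel_def strict_sublevel_def by auto
      qed simp
    qed
    then have ss: "insert sb (sublevel K f (f \<rho>)) \<subseteq> insert sb (strict_sublevel K f (f \<rho>))" by blast
    have "P (strict_sublevel K f (f \<rho>))" unfolding P_def by (rule is_boundary_mono[OF ss \<rho>(2)[unfolded P_def]])
    then show False using strictP by simp
  qed
  have bf: "f \<rho> < b" using fr rsb f_eq[OF \<rho>(1) sbK] fsb by fastforce
  obtain c where c: "c \<in> chains (insert sb (sublevel K f (f \<rho>))) (Suc n)" "bd K c = \<alpha>"
    using \<rho>(2) unfolding P_def is_boundary_def by blast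
  have supp: "\<sigma> \<in> insert sb (strict_sublevel K f (f \<rho>))"
    if "\<sigma> \<in> insert sb (sublevel K f (f \<rho>))" "\<sigma> \<noteq> \<rho>" for \<sigma>
  proof (cases "\<sigma> = sb")
    case False
    then have "\<sigma> \<in> K" "f \<sigma> \<le> f \<rho>" using that unfolding sublevel_def by auto
    moreover have "f \<sigma> \<noteq> f \<rho>" using f_eq[of \<sigma> \<rho>] \<rho>(1) that(2) calculation(1) by auto
    ultimately show ?thesis unfolding strict_sublevel_def by auto
  qed simp
  have lam: "c \<rho> \<noteq> 0"
  proof
    assume c\<rho>: "c \<rho> = 0"
    have "c \<in> chains (insert sb (strict_sublevel K f (f \<rho>))) (Suc n)"
      unfolding chains_def
    proof (intro CollectI allI impI)
      fix \<sigma> assume "c \<sigma> \<noteq> 0"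
      then have s: "\<sigma> \<in> insert sb (sublevel K f (f \<rho>))" "card \<sigma> = Suc (Suc n)" "\<sigma> \<noteq> \<rho>"
        using c(1) c\<rho> unfolding chains_def by auto
      then show "\<sigma> \<in> insert sb (strict_sublevel K f (f \<rho>)) \<and> card \<sigma> = Suc (Suc n)"
        using supp by auto
    qed
    then have "P (strict_sublevel K f (f \<rho>))" using c(2) unfolding P_def is_boundary_def by blast
    then show False using strictP by blast
  qed
  define z where "z = bd K (elem_chain \<rho> :: 'v set \<Rightarrow> 'k)"
  have zc: "z \<in> chains (strict_sublevel K f (f \<rho>)) n"
    unfolding chains_def
  proof (intro CollectI allI impI)
    fix \<sigma> assume "z \<sigma> \<noteq> 0"
    then have s: "\<sigma> \<subseteq> \<rho>" "card \<rho> = Suc (card \<sigma>)"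
      unfolding z_def bd_elem[OF finK] by (auto split: if_splits)
    then have cs: "card \<sigma> = Suc n" using cr by simp
    then have "\<sigma> \<noteq> {}" by auto
    then have sK: "\<sigma> \<in> K" using sc_face[OF K \<rho>(1) s(1)] by simp
    have "f \<sigma> \<le> f \<rho>" using filt[OF sK \<rho>(1) s(1)] .
    moreover have "\<sigma> \<noteq> \<rho>" using s(2) by auto
    then have "f \<sigma> \<noteq> f \<rho>" using f_eq[OF sK \<rho>(1)] by auto
    ultimately show "\<sigma> \<in> strict_sublevel K f (f \<rho>) \<and> card \<sigma> = Suc n"
      using sK cs unfolding strict_sublevel_def by auto
  qed
  have zcyc: "is_cycle K (strict_sublevel K f (f \<rho>)) n z"
    unfolding is_cycle_def using zc bd_bd_elem[OF K \<rho>(1)] unfolding z_def by auto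
  have znb: "\<not> is_boundary K (strict_sublevel K f (f \<rho>)) n z"
  proof
    assume "is_boundary K (strict_sublevel K f (f \<rho>)) n z"
    then obtain d where d: "d \<in> chains (strict_sublevel K f (f \<rho>)) (Suc n)" "bd K d = z"
      unfolding is_boundary_def by blast
    define l where "l = c \<rho>"
    define c' where "c' = (\<lambda>x. (c x - l * elem_chain \<rho> x) + l * d x)"
    have "bd K c' = (\<lambda>x. (bd K c x - l * bd K (elem_chain \<rho>) x) + l * bd K d x)"
      unfolding c'_def bd_add bd_diff bd_scale by simp
    also have "\<dots> = \<alpha>" unfolding c(2) d(2) z_def by simp
    finally have bc': "bd K c' = \<alpha>" .
    have "d \<rho> = 0" using d(1) unfolding chains_def strict_sublevel_def by auto
    have "c' \<in> chains (insert sb (strict_sublevel K f (f \<rho>))) (Suc n)"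
      unfolding chains_def
    proof (intro CollectI allI impI)
      fix \<sigma> assume c'\<sigma>: "c' \<sigma> \<noteq> 0"
      show "\<sigma> \<in> insert sb (strict_sublevel K f (f \<rho>)) \<and> card \<sigma> = Suc (Suc n)"
      proof (cases "\<sigma> = \<rho>")
        case True
        then have "c' \<sigma> = 0" unfolding c'_def l_def elem_chain_def using \<open>d \<rho> = 0\<close> by simp
        then show ?thesis using c'\<sigma> by simp
      next
        case False
        then have "c \<sigma> + l * d \<sigma> \<noteq> 0" using c'\<sigma> unfolding c'_def elem_chain_def by simp
        then have "c \<sigma> \<noteq> 0 \<or> d \<sigma> \<noteq> 0" by auto
        then show ?thesis
        proof
          assume "c \<sigma> \<noteq> 0"
          then show ?thesis using c(1) supp False unfolding chains_def by auto
        next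
          assume "d \<sigma> \<noteq> 0"
          then show ?thesis using d(1) unfolding chains_def by auto
        qed
      qed
    qed
    then have "P (strict_sublevel K f (f \<rho>))" using bc' unfolding P_def is_boundary_def by blast
    then show False using strictP by blast
  qed
  have zb: "is_boundary K (insert \<rho> (strict_sublevel K f (f \<rho>))) n z"
    unfolding is_boundary_def z_def
    by (rule bexI[of _ "elem_chain \<rho>"]) (auto simp: chains_def elem_chain_def cr split: if_splits)
  have termS: "terminal_simplex K f TYPE('k) \<rho>"
    unfolding terminal_simplex_def using \<rho>(1) cr zcyc znb zb by auto
  have switch: "\<rho> \<in> Delta_set K f n \<alpha> \<epsilon>" if \<epsilon>: "(b - f \<rho>) / 2 < \<epsilon>" for \<epsilon>
  proof -
    define E where "E = (\<lambda>(x, y). (f x - f y) / 2) ` (K \<times> K)"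
    have "finite E" unfolding E_def using finK by auto
    then obtain e where e: "(b - f \<rho>) / 2 < e" "e \<le> \<epsilon>" "e \<notin> E" using avoid_finite[OF \<epsilon>] by blast
    have e0: "0 < e" using e bf by auto
    define g where "g = (\<lambda>\<tau>. if \<tau> \<subseteq> sb then f \<tau> - e else f \<tau> + e)"
    have gfilt: "filtration K g"
      unfolding filtration_def g_def using filt e0 by fastforce
    have ginj: "inj_on g K"
    proof (rule inj_onI)
      fix x y assume xy: "x \<in> K" "y \<in> K" "g x = g y"
      show "x = y"
      proof (cases "x \<subseteq> sb \<longleftrightarrow> y \<subseteq> sb")
        case True
        then have "f x = f y" using xy(3) unfolding g_def by (auto split: if_splits)
        then show ?thesis using f_eq xy by auto
      next
        case False
        then have "e = (f y - f x) / 2 \<or> e = (f x - f y) / 2" using xy(3) unfolding g_def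
          by (auto split: if_splits)
        then have "e \<in> E" unfolding E_def
        proof
          assume "e = (f y - f x) / 2"
          then show "e \<in> (\<lambda>(x, y). (f x - f y) / 2) ` (K \<times> K)"
            using xy by (intro rev_image_eqI[of "(y, x)"]) auto
        next
          assume "e = (f x - f y) / 2"
          then show "e \<in> (\<lambda>(x, y). (f x - f y) / 2) ` (K \<times> K)"
            using xy by (intro rev_image_eqI[of "(x, y)"]) auto
        qed
        then show ?thesis using e by auto
      qed
    qed
    have pert: "inj_perturbation K f \<epsilon> g"
      unfolding inj_perturbation_def injective_filtration_def using gfilt ginj e e0
      unfolding g_def by auto
    have g\<rho>: "g \<rho> = f \<rho> + e" using same_card_sb2[OF \<rho>(1) cr] rsb unfolding g_def by auto
    have gsb: "g sb = b - e" using fsb unfolding g_def by auto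
    have gN: "g \<sigma> = f \<sigma> + e" if "\<sigma> \<in> K" "card \<sigma> = Suc (Suc n)" "\<sigma> \<noteq> sb" for \<sigma>
      using same_card_sb2[OF that(1,2)] that(3) unfolding g_def by auto
    have B1: "is_boundary K (sublevel K g (g \<rho>)) n \<alpha>"
    proof -
      have "is_boundary K (insert sb (sublevel K f (f \<rho>)) \<inter> {\<sigma>. card \<sigma> = Suc (Suc n)}) n \<alpha>"
        using \<rho>(2) unfolding P_def
        by (subst is_boundary_cong[where L'="insert sb (sublevel K f (f \<rho>))"]) auto
      moreover have "insert sb (sublevel K f (f \<rho>)) \<inter> {\<sigma>. card \<sigma> = Suc (Suc n)} \<subseteq> sublevel K g (g \<rho>)"
      proof
        fix \<sigma> assume s: "\<sigma> \<in> insert sb (sublevel K f (f \<rho>)) \<inter> {\<sigma>. card \<sigma> = Suc (Suc n)}"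
        show "\<sigma> \<in> sublevel K g (g \<rho>)"
        proof (cases "\<sigma> = sb")
          case True
          then show ?thesis using gsb g\<rho> e(1) sbK unfolding sublevel_def by auto
        next
          case False
          then have "g \<sigma> = f \<sigma> + e" using gN s unfolding sublevel_def by blast
          then show ?thesis using s g\<rho> False unfolding sublevel_def by auto
        qed
      qed
      ultimately show ?thesis by (rule is_boundary_mono[rotated])
    qed
    have B2: "\<not> is_boundary K (sublevel K g r) n \<alpha>" if rr: "r < g \<rho>" for r
    proof
      assume h: "is_boundary K (sublevel K g r) n \<alpha>"
      have "sublevel K g r \<inter> {\<sigma>. card \<sigma> = Suc (Suc n)} \<subseteq> insert sb (strict_sublevel K f (f \<rho>))"
      proof
        fix \<sigma> assume s: "\<sigma> \<in> sublevel K g r \<inter> {\<sigma>. card \<sigma> = Suc (Suc n)}"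
        show "\<sigma> \<in> insert sb (strict_sublevel K f (f \<rho>))"
        proof (cases "\<sigma> = sb")
          case False
          then show ?thesis
            using s gN[of \<sigma>] rr g\<rho> unfolding sublevel_def strict_sublevel_def by auto
        qed simp
      qed
      moreover have "is_boundary K (sublevel K g r \<inter> {\<sigma>. card \<sigma> = Suc (Suc n)}) n \<alpha>"
        using h by (subst is_boundary_cong[where L'="sublevel K g r"]) auto
      ultimately have "P (strict_sublevel K f (f \<rho>))" unfolding P_def
        by (rule is_boundary_mono)
      then show False using strictP by blast
    qed
    show ?thesis unfolding Delta_set_def using pert \<rho>(1) B1 B2 by blast
  qed
  show ?thesis using \<rho>(1,2) cr rsb bf termS switch unfolding P_def by blast
qed


definition good :: "'v set \<Rightarrow> bool" where
  "good \<rho> \<longleftrightarrow> \<rho> \<in> K \<and> card \<rho> = Suc (Suc n) \<and> \<rho> \<noteq> sb \<and>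
     ((b < f \<rho> \<and> birth_simplex K f TYPE('k) \<rho> \<and>
        (\<forall>\<epsilon>. (f \<rho> - b) / 2 < \<epsilon> \<longrightarrow> \<rho> \<in> Delta_set K f n \<alpha> \<epsilon>)) \<or>
      (f \<rho> < b \<and> terminal_simplex K f TYPE('k) \<rho> \<and>
        (\<forall>\<epsilon>. (b - f \<rho>) / 2 < \<epsilon> \<longrightarrow> \<rho> \<in> Delta_set K f n \<alpha> \<epsilon>)))"

lemma core:
  assumes r: "\<rho> \<in> Delta_set K f n \<alpha> x" and rsb: "\<rho> \<noteq> sb"
  shows "\<exists>\<rho>'. good \<rho>' \<and> \<bar>f \<rho>' - b\<bar> < 2 * x"
proof -
  obtain g where g: "inj_perturbation K f x g" "\<rho> \<in> K" "is_boundary K (sublevel K g (g \<rho>)) n \<alpha>"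
    "\<forall>r < g \<rho>. \<not> is_boundary K (sublevel K g r) n \<alpha>"
    using r unfolding Delta_set_def by blast
  have ginj: "inj_on g K" using g(1) unfolding inj_perturbation_def injective_filtration_def by auto
  have gx: "\<bar>f \<sigma> - g \<sigma>\<bar> \<le> x" if "\<sigma> \<in> K" for \<sigma> using g(1) that unfolding inj_perturbation_def by auto
  have gsb: "g sb \<noteq> g \<rho>" using ginj sbK g(2) rsb unfolding inj_on_def by auto
  have gsbx: "\<bar>b - g sb\<bar> \<le> x" using gx[OF sbK] fsb by simp
  show ?thesis
  proof (cases "g \<rho> < g sb")
    case True
    have "sublevel K g (g \<rho>) \<subseteq> sublevel K f (g \<rho> + x) - {sb}"
    proof
      fix \<sigma> assume s: "\<sigma> \<in> sublevel K g (g \<rho>)"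
      then have "\<sigma> \<in> K" "g \<sigma> \<le> g \<rho>" unfolding sublevel_def by auto
      then show "\<sigma> \<in> sublevel K f (g \<rho> + x) - {sb}"
        using gx[of \<sigma>] True unfolding sublevel_def by auto
    qed
    then have "is_boundary K (sublevel K f (g \<rho> + x) - {sb}) n \<alpha>" by (rule is_boundary_mono[OF _ g(3)])
    then obtain \<rho>' where \<rho>': "\<rho>' \<in> K" "card \<rho>' = Suc (Suc n)" "\<rho>' \<noteq> sb" "b < f \<rho>'" "f \<rho>' \<le> g \<rho> + x"
      "birth_simplex K f TYPE('k) \<rho>'" "\<forall>\<epsilon>. (f \<rho>' - b) / 2 < \<epsilon> \<longrightarrow> \<rho>' \<in> Delta_set K f n \<alpha> \<epsilon>"
      using birth_side by blast
    have "good \<rho>'" unfolding good_def using \<rho>' by blast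
    moreover have "\<bar>f \<rho>' - b\<bar> < 2 * x" using \<rho>'(4,5) True gsbx by auto
    ultimately show ?thesis by blast
  next
    case False
    then have lt: "g sb < g \<rho>" using gsb by auto
    have nsb: "\<not> is_boundary K {sb} n \<alpha>"
    proof
      assume "is_boundary K {sb} n \<alpha>"
      moreover have "{sb} \<subseteq> sublevel K g (g sb)" using sbK unfolding sublevel_def by auto
      ultimately have "is_boundary K (sublevel K g (g sb)) n \<alpha>" using is_boundary_mono by metis
      then show False using g(4) lt by auto
    qed
    obtain \<rho>' where \<rho>': "\<rho>' \<in> K" "card \<rho>' = Suc (Suc n)" "\<rho>' \<noteq> sb" "f \<rho>' < b"
      "is_boundary K (insert sb (sublevel K f (f \<rho>'))) n \<alpha>"
      "terminal_simplex K f TYPE('k) \<rho>'" "\<forall>\<epsilon>. (b - f \<rho>') / 2 < \<epsilon> \<longrightarrow> \<rho>' \<in> Delta_set K f n \<alpha> \<epsilon>"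
      using term_side[OF nsb] by blast
    have "good \<rho>'" unfolding good_def using \<rho>' by blast
    moreover have "b - f \<rho>' < 2 * x"
    proof (rule ccontr)
      assume "\<not> b - f \<rho>' < 2 * x"
      have "insert sb (sublevel K f (f \<rho>')) \<subseteq> sublevel K g (g sb)"
      proof
        fix \<sigma> assume s: "\<sigma> \<in> insert sb (sublevel K f (f \<rho>'))"
        show "\<sigma> \<in> sublevel K g (g sb)"
        proof (cases "\<sigma> = sb")
          case True then show ?thesis using sbK unfolding sublevel_def by auto
        next
          case False
          then have "\<sigma> \<in> K" "f \<sigma> \<le> f \<rho>'" using s unfolding sublevel_def by auto
          then show ?thesis using gx[of \<sigma>] gsbx \<open>\<not> b - f \<rho>' < 2 * x\<close> unfolding sublevel_def by auto
        qed
      qed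
      then have "is_boundary K (sublevel K g (g sb)) n \<alpha>" by (rule is_boundary_mono[OF _ \<rho>'(5)])
      then show False using g(4) lt by auto
    qed
    then have "\<bar>f \<rho>' - b\<bar> < 2 * x" using \<rho>'(4) by auto
    ultimately show ?thesis by blast
  qed
qed

lemma good_Delta: "good \<rho> \<Longrightarrow> \<bar>f \<rho> - b\<bar> < 2 * t \<Longrightarrow> \<rho> \<in> Delta_set K f n \<alpha> t"
  unfolding good_def by auto

lemma main_conc:
  assumes D: "Delta_set K f n \<alpha> t0 = {sb}" and tB: "t0 < B"
    and ex: "\<forall>x. t0 < x \<and> x \<le> B \<longrightarrow> (\<exists>\<rho>\<in>Delta_set K f n \<alpha> x. \<rho> \<noteq> sb)"
  shows "\<exists>\<rho>. good \<rho> \<and> \<bar>f \<rho> - b\<bar> = 2 * t0"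
proof -
  define G where "G = {\<rho>\<in>K. good \<rho>}"
  have finG: "finite ((\<lambda>\<rho>. \<bar>f \<rho> - b\<bar>) ` G)" unfolding G_def using finK by auto
  obtain \<rho>1 where "\<rho>1 \<in> Delta_set K f n \<alpha> B" "\<rho>1 \<noteq> sb" using ex tB by blast
  then obtain \<rho>2 where "good \<rho>2" using core by blast
  then have neG: "(\<lambda>\<rho>. \<bar>f \<rho> - b\<bar>) ` G \<noteq> {}" unfolding G_def good_def by auto
  obtain \<rho>0 where \<rho>0: "\<rho>0 \<in> G" "\<bar>f \<rho>0 - b\<bar> = Min ((\<lambda>\<rho>. \<bar>f \<rho> - b\<bar>) ` G)"
    using Min_in[OF finG neG] by auto
  have g0: "good \<rho>0" using \<rho>0 unfolding G_def by auto
  have ge: "2 * t0 \<le> \<bar>f \<rho>0 - b\<bar>"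
  proof (rule ccontr)
    assume "\<not> 2 * t0 \<le> \<bar>f \<rho>0 - b\<bar>"
    then have "\<rho>0 \<in> Delta_set K f n \<alpha> t0" using good_Delta[OF g0] by auto
    moreover have "\<rho>0 \<noteq> sb" using g0 unfolding good_def by auto
    ultimately show False using D by auto
  qed
  have le: "\<bar>f \<rho>0 - b\<bar> \<le> 2 * t0"
  proof (rule ccontr)
    assume a: "\<not> \<bar>f \<rho>0 - b\<bar> \<le> 2 * t0"
    define x where "x = min (\<bar>f \<rho>0 - b\<bar> / 2) B"
    have "t0 < x" "x \<le> B" using a tB unfolding x_def by auto
    then obtain \<rho> where "\<rho> \<in> Delta_set K f n \<alpha> x" "\<rho> \<noteq> sb" using ex by blast
    then obtain \<rho>' where \<rho>': "good \<rho>'" "\<bar>f \<rho>' - b\<bar> < 2 * x" using core by blast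
    then have "\<rho>' \<in> G" unfolding G_def good_def by auto
    then have A: "\<bar>f \<rho>0 - b\<bar> \<le> \<bar>f \<rho>' - b\<bar>" using \<rho>0(2) Min_le[OF finG] by auto
    have B: "x \<le> \<bar>f \<rho>0 - b\<bar> / 2" unfolding x_def by (rule min.cobounded1)
    have C: "\<bar>f \<rho>' - b\<bar> < 2 * x" by (rule \<rho>'(2))
    have D2: "2 * x \<le> \<bar>f \<rho>0 - b\<bar>" using B by simp
    have "\<bar>f \<rho>' - b\<bar> < \<bar>f \<rho>0 - b\<bar>" using C D2 by (rule less_le_trans)
    then show False using A by simp
  qed
  show ?thesis using ge le g0 by auto
qed

lemma part2:
  assumes D: "Delta_set K f n \<alpha> t0 = {sb}" and s: "s < t0" and \<tau>: "\<tau> \<in> K" "f \<tau> \<le> b + 2 * s"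
    and sub: "sb \<subset> \<tau>"
  shows False
proof -
  obtain w where w: "w \<in> \<tau>" "w \<notin> sb" using sub by auto
  define \<tau>' where "\<tau>' = insert w sb"
  have t'K: "\<tau>' \<in> K" using sc_face[OF K \<tau>(1), of \<tau>'] w sub unfolding \<tau>'_def by auto
  have ft': "f \<tau>' \<le> f \<tau>" using filt[OF t'K \<tau>(1)] w sub unfolding \<tau>'_def by auto
  have fin': "finite \<tau>'" using finS[OF t'K] .
  have fsbt: "b \<le> f \<tau>'" using filt[OF sbK t'K] fsb unfolding \<tau>'_def by auto
  obtain c0 where c0: "c0 \<in> chains (sublevel K f b) (Suc n)" "bd K c0 = \<alpha>"
    using bdyb unfolding is_boundary_def by blast
  define l where "l = c0 sb"
  define \<mu> where "\<mu> = bd K (elem_chain \<tau>' :: 'v set \<Rightarrow> 'k) sb"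
  have \<mu>: "\<mu> = (-1) ^ card {u\<in>\<tau>'. u < w}"
    unfolding \<mu>_def by (rule bd_elem_face[OF finK t'K fin' w(2)]) (simp add: \<tau>'_def)
  have \<mu>0: "\<mu> \<noteq> 0" unfolding \<mu> by simp
  define c' where "c' = (\<lambda>x. c0 x - (l / \<mu>) * bd K (elem_chain \<tau>' :: 'v set \<Rightarrow> 'k) x)"
  have "bd K c' = (\<lambda>x. bd K c0 x - (l / \<mu>) * bd K (bd K (elem_chain \<tau>' :: 'v set \<Rightarrow> 'k)) x)"
    unfolding c'_def bd_diff bd_scale by simp
  also have "\<dots> = \<alpha>" unfolding c0(2) bd_bd_elem[OF K t'K] by simp
  finally have bc': "bd K c' = \<alpha>" .
  have "c' \<in> chains (sublevel K f (f \<tau>') - {sb}) (Suc n)"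
    unfolding chains_def
  proof (intro CollectI allI impI)
    fix \<sigma> assume c\<sigma>: "c' \<sigma> \<noteq> 0"
    have "\<sigma> \<noteq> sb"
    proof
      assume "\<sigma> = sb"
      then have "c' \<sigma> = l - l / \<mu> * \<mu>" unfolding c'_def l_def \<mu>_def by simp
      then show False using c\<sigma> \<mu>0 by simp
    qed
    moreover have "\<sigma> \<in> sublevel K f (f \<tau>') \<and> card \<sigma> = Suc (Suc n)"
    proof (cases "c0 \<sigma> = 0")
      case False
      then show ?thesis using c0(1) fsbt unfolding chains_def sublevel_def by auto
    next
      case True
      then have "bd K (elem_chain \<tau>' :: 'v set \<Rightarrow> 'k) \<sigma> \<noteq> 0" using c\<sigma> unfolding c'_def by auto
      then have s: "\<sigma> \<subseteq> \<tau>'" "card \<tau>' = Suc (card \<sigma>)"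
        unfolding bd_elem[OF finK] by (auto split: if_splits)
      have "card \<tau>' = Suc (Suc (Suc n))" unfolding \<tau>'_def using w(2) finS[OF sbK] sbc by simp
      then have cs: "card \<sigma> = Suc (Suc n)" using s by simp
      then have "\<sigma> \<noteq> {}" by auto
      then have sK: "\<sigma> \<in> K" using sc_face[OF K t'K s(1)] by simp
      then show ?thesis using filt[OF sK t'K s(1)] cs unfolding sublevel_def by auto
    qed
    ultimately show "\<sigma> \<in> sublevel K f (f \<tau>') - {sb} \<and> card \<sigma> = Suc (Suc n)" by auto
  qed
  then have "is_boundary K (sublevel K f (f \<tau>') - {sb}) n \<alpha>" using bc' unfolding is_boundary_def by blast
  then obtain \<rho>' where \<rho>': "\<rho>' \<noteq> sb" "b < f \<rho>'" "f \<rho>' \<le> f \<tau>'"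
      "\<forall>\<epsilon>. (f \<rho>' - b) / 2 < \<epsilon> \<longrightarrow> \<rho>' \<in> Delta_set K f n \<alpha> \<epsilon>"
    using birth_side by blast
  have "\<rho>' \<in> Delta_set K f n \<alpha> t0" using \<rho>'(3,4) ft' \<tau>(2) s by auto
  then show False using D \<rho>'(1) by auto
qed

end

theorem proposition3p4:
  fixes K :: "'v::linorder set set" and f :: "'v set \<Rightarrow> real" and n :: nat
    and \<alpha> :: "'v set \<Rightarrow> 'k::field" and a b t0 :: real and \<Delta>1 :: "'v set"
  assumes K: "simplicial_complex K"
    and n: "n > 0"
    and f: "generic K f"
    and cyc: "is_cycle K (sublevel K f a) n \<alpha>"
    and nontriv: "\<not> is_boundary K (sublevel K f a) n \<alpha>"
    and born: "born_at K f n \<alpha> a a"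
    and termd: "terminated_at K f n \<alpha> a b"
    and ab: "b > a"
    and big: "\<exists>x\<in>{0<..(b - a) / 2}. card (Delta_set K f n \<alpha> x) \<ge> 2"
    and t0_mem: "t0 \<in> {0<..(b - a) / 2}" and t0_card: "card (Delta_set K f n \<alpha> t0) = 1"
    and t0_max: "\<forall>x\<in>{0<..(b - a) / 2}. card (Delta_set K f n \<alpha> x) = 1 \<longrightarrow> x \<le> t0"
    and Delta1: "Delta_set K f n \<alpha> t0 = {\<Delta>1}"
  shows "\<exists>\<sigma>i \<sigma>j. \<sigma>i \<in> K \<and> card \<sigma>i = n + 2 \<and> \<sigma>j \<in> K \<and> card \<sigma>j = n + 2 \<and>
           f \<sigma>j - t0 = f \<sigma>i + t0 \<and>
           \<Delta>1 \<in> {\<sigma>i, \<sigma>j} \<and>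
           (\<forall>s < t0. \<forall>\<tau>\<in>K. f \<tau> \<le> f \<Delta>1 + 2 * s \<longrightarrow> \<not> \<Delta>1 \<subset> \<tau>) \<and>
           (\<forall>t. t \<in> {0<..(b - a) / 2} \<and> t > t0 \<and>
                ((\<lambda>x. real (card (Delta_set K f n \<alpha> x))) \<longlongrightarrow> real (card (Delta_set K f n \<alpha> t))) (at_right t0)
              \<longrightarrow> (\<Delta>1 = \<sigma>j \<longrightarrow> {\<sigma>i, \<sigma>j} \<subseteq> Delta_set K f n \<alpha> t \<and> terminal_simplex K f TYPE('k) \<sigma>i) \<and>
                  (\<Delta>1 = \<sigma>i \<longrightarrow> {\<sigma>i, \<sigma>j} \<subseteq> Delta_set K f n \<alpha> t \<and> birth_simplex K f TYPE('k) \<sigma>j))"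
proof -
  have injf: "injective_filtration K f" using f unfolding generic_def by auto
  have finK: "finite K" using sc_finite[OF K] .
  have inj: "inj_on f K" using injf unfolding injective_filtration_def by auto
  define P0 where "P0 = (\<lambda>S. is_boundary K S n \<alpha>)"
  have mono0: "\<forall>S S'. S \<subseteq> S' \<longrightarrow> P0 S \<longrightarrow> P0 S'"
    unfolding P0_def
  proof (intro allI impI)
    fix S S' :: "'v set set" assume h: "S \<subseteq> S'" "is_boundary K S n \<alpha>"
    then show "is_boundary K S' n \<alpha>" by (rule is_boundary_mono)
  qed
  have e0: "\<not> P0 {}"
  proof
    assume "P0 {}"
    then have "is_boundary K (sublevel K f a) n \<alpha>" unfolding P0_def by (rule is_boundary_mono[rotated]) simp
    then show False using nontriv by simp
  qed
  have PN0: "P0 (S \<inter> {\<sigma>. card \<sigma> = Suc (Suc n)})" if "P0 S" for S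
    using that unfolding P0_def by (subst is_boundary_cong[where L'="S"]) auto
  define S where "S = {q. q \<ge> a \<and> is_boundary K (sublevel K f q) n \<alpha>}"
  have Sne: "S \<noteq> {}" and bS: "b = Inf S" using termd unfolding terminated_at_def Let_def S_def by auto
  obtain q0 where q0: "q0 \<in> S" using Sne by blast
  have "P0 (sublevel K f q0)" using q0 unfolding S_def P0_def by auto
  then obtain \<sigma>b where sb: "\<sigma>b \<in> K" "P0 (sublevel K f (f \<sigma>b))" "\<forall>r'<f \<sigma>b. \<not> P0 (sublevel K f r')"
    using crit[where P=P0, OF finK e0 mono0] by blast
  have csb: "card \<sigma>b = Suc (Suc n)"
    using crit_in_N[where P=P0 and N="{\<sigma>. card \<sigma> = Suc (Suc n)}", OF finK e0 mono0 inj PN0 sb] by simp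
  have afsb: "a \<le> f \<sigma>b"
  proof (rule ccontr)
    assume "\<not> a \<le> f \<sigma>b"
    then have "sublevel K f (f \<sigma>b) \<subseteq> sublevel K f a" unfolding sublevel_def by auto
    then have "is_boundary K (sublevel K f a) n \<alpha>" using sb(2) unfolding P0_def by (rule is_boundary_mono)
    then show False using nontriv by simp
  qed
  have fsbS: "f \<sigma>b \<in> S" using afsb sb(2) unfolding S_def P0_def by auto
  have bdd: "bdd_below S" unfolding S_def bdd_below_def by auto
  have "Inf S \<le> f \<sigma>b" using cInf_lower[OF fsbS bdd] .
  moreover have "f \<sigma>b \<le> Inf S"
  proof (rule cInf_greatest[OF Sne])
    fix q assume "q \<in> S"
    then have "P0 (sublevel K f q)" unfolding S_def P0_def by auto
    then show "f \<sigma>b \<le> q" using sb(3) by force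
  qed
  ultimately have fsb: "f \<sigma>b = b" using bS by simp
  interpret PS: PSetup K f n \<alpha> b \<sigma>b
  proof
    show "simplicial_complex K" by (rule K)
    show "injective_filtration K f" by (rule injf)
    show "\<sigma>b \<in> K" by (rule sb(1))
    show "card \<sigma>b = Suc (Suc n)" by (rule csb)
    show "f \<sigma>b = b" by (rule fsb)
    show "is_boundary K (sublevel K f b) n \<alpha>" using sb(2) fsb unfolding P0_def by simp
    show "\<forall>q<b. \<not> is_boundary K (sublevel K f q) n \<alpha>" using sb(3) fsb unfolding P0_def by simp
  qed
  have t0pos: "0 < t0" using t0_mem by auto
  have "\<sigma>b \<in> Delta_set K f n \<alpha> t0" using t0pos by (intro PS.sb_Delta) simp
  then have D0: "Delta_set K f n \<alpha> t0 = {\<sigma>b}" using Delta1 by auto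
  have D1: "\<Delta>1 = \<sigma>b" using D0 Delta1 by auto
  have finD: "finite (Delta_set K f n \<alpha> x)" for x by (rule finite_subset[OF Delta_sub finK])
  obtain x where x: "x \<in> {0<..(b - a) / 2}" "card (Delta_set K f n \<alpha> x) \<ge> 2" using big by blast
  have tB: "t0 < (b - a) / 2"
  proof (rule ccontr)
    assume "\<not> t0 < (b - a) / 2"
    then have "x \<le> t0" using x(1) by auto
    then have "Delta_set K f n \<alpha> x \<subseteq> Delta_set K f n \<alpha> t0" by (rule Delta_mono)
    then have "Delta_set K f n \<alpha> x \<subseteq> {\<sigma>b}" unfolding D0 .
    then have "card (Delta_set K f n \<alpha> x) \<le> card {\<sigma>b}" by (rule card_mono[rotated]) simp
    then have "card (Delta_set K f n \<alpha> x) \<le> 1" by simp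
    then show False using x(2) by simp
  qed
  have ex: "\<forall>x. t0 < x \<and> x \<le> (b - a) / 2 \<longrightarrow> (\<exists>\<rho>\<in>Delta_set K f n \<alpha> x. \<rho> \<noteq> \<sigma>b)"
  proof (intro allI impI)
    fix x assume xx: "t0 < x \<and> x \<le> (b - a) / 2"
    then have xD: "x \<in> {0<..(b - a) / 2}" using t0pos by auto
    have c1: "card (Delta_set K f n \<alpha> x) \<noteq> 1"
    proof
      assume "card (Delta_set K f n \<alpha> x) = 1"
      then have "x \<le> t0" by (rule t0_max[rule_format, OF xD])
      then show False using xx by simp
    qed
    have inx: "\<sigma>b \<in> Delta_set K f n \<alpha> x" using xx t0pos by (intro PS.sb_Delta) simp
    show "\<exists>\<rho>\<in>Delta_set K f n \<alpha> x. \<rho> \<noteq> \<sigma>b"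
    proof (rule ccontr)
      assume "\<not> (\<exists>\<rho>\<in>Delta_set K f n \<alpha> x. \<rho> \<noteq> \<sigma>b)"
      then have "Delta_set K f n \<alpha> x \<subseteq> {\<sigma>b}" by blast
      then have "Delta_set K f n \<alpha> x = {\<sigma>b}" using inx by blast
      then show False using c1 by simp
    qed
  qed
  obtain \<rho>0 where \<rho>0: "PS.good \<rho>0" "\<bar>f \<rho>0 - b\<bar> = 2 * t0" using PS.main_conc[OF D0 tB ex] by blast
  have part2: "\<forall>s < t0. \<forall>\<tau>\<in>K. f \<tau> \<le> f \<Delta>1 + 2 * s \<longrightarrow> \<not> \<Delta>1 \<subset> \<tau>"
  proof (intro allI impI ballI notI)
    fix s \<tau>' assume h: "s < t0" "\<tau>' \<in> K" "f \<tau>' \<le> f \<Delta>1 + 2 * s" "\<Delta>1 \<subset> \<tau>'"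
    show False using PS.part2[OF D0 h(1) h(2)] h(3,4) D1 fsb by simp
  qed
  have r0: "\<rho>0 \<in> K" "card \<rho>0 = n + 2" "\<rho>0 \<noteq> \<sigma>b" using \<rho>0(1) unfolding PS.good_def by auto
  have csb2: "card \<sigma>b = n + 2" using csb by simp
  have inD: "\<sigma>b \<in> Delta_set K f n \<alpha> t" if "t > t0" for t using that t0pos by (intro PS.sb_Delta) simp
  from \<rho>0(1) consider
      (B) "b < f \<rho>0" "birth_simplex K f TYPE('k) \<rho>0"
          "\<forall>\<epsilon>. (f \<rho>0 - b) / 2 < \<epsilon> \<longrightarrow> \<rho>0 \<in> Delta_set K f n \<alpha> \<epsilon>"
    | (T) "f \<rho>0 < b" "terminal_simplex K f TYPE('k) \<rho>0"
          "\<forall>\<epsilon>. (b - f \<rho>0) / 2 < \<epsilon> \<longrightarrow> \<rho>0 \<in> Delta_set K f n \<alpha> \<epsilon>"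
    unfolding PS.good_def by blast
  then show ?thesis
  proof cases
    case B
    have eq: "f \<rho>0 - t0 = f \<sigma>b + t0" using B(1) \<rho>0(2) fsb by auto
    have tp: "\<forall>t. t \<in> {0<..(b - a) / 2} \<and> t > t0 \<and>
                ((\<lambda>x. real (card (Delta_set K f n \<alpha> x))) \<longlongrightarrow> real (card (Delta_set K f n \<alpha> t))) (at_right t0)
              \<longrightarrow> (\<Delta>1 = \<rho>0 \<longrightarrow> {\<sigma>b, \<rho>0} \<subseteq> Delta_set K f n \<alpha> t \<and> terminal_simplex K f TYPE('k) \<sigma>b) \<and>
                  (\<Delta>1 = \<sigma>b \<longrightarrow> {\<sigma>b, \<rho>0} \<subseteq> Delta_set K f n \<alpha> t \<and> birth_simplex K f TYPE('k) \<rho>0)"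
    proof (intro allI impI)
      fix t assume "t \<in> {0<..(b - a) / 2} \<and> t > t0 \<and>
                ((\<lambda>x. real (card (Delta_set K f n \<alpha> x))) \<longlongrightarrow> real (card (Delta_set K f n \<alpha> t))) (at_right t0)"
      then have tt: "t > t0" by auto
      have "\<rho>0 \<in> Delta_set K f n \<alpha> t" using B(1,3) \<rho>0(2) tt by auto
      then show "(\<Delta>1 = \<rho>0 \<longrightarrow> {\<sigma>b, \<rho>0} \<subseteq> Delta_set K f n \<alpha> t \<and> terminal_simplex K f TYPE('k) \<sigma>b) \<and>
                  (\<Delta>1 = \<sigma>b \<longrightarrow> {\<sigma>b, \<rho>0} \<subseteq> Delta_set K f n \<alpha> t \<and> birth_simplex K f TYPE('k) \<rho>0)"
        using inD[OF tt] D1 r0(3) B(2) by auto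
    qed
    show ?thesis
      apply (rule exI[of _ \<sigma>b], rule exI[of _ \<rho>0])
      using sb(1) csb2 r0(1,2) eq D1 part2 tp by auto
  next
    case T
    have eq: "f \<sigma>b - t0 = f \<rho>0 + t0" using T(1) \<rho>0(2) fsb by auto
    have tp: "\<forall>t. t \<in> {0<..(b - a) / 2} \<and> t > t0 \<and>
                ((\<lambda>x. real (card (Delta_set K f n \<alpha> x))) \<longlongrightarrow> real (card (Delta_set K f n \<alpha> t))) (at_right t0)
              \<longrightarrow> (\<Delta>1 = \<sigma>b \<longrightarrow> {\<rho>0, \<sigma>b} \<subseteq> Delta_set K f n \<alpha> t \<and> terminal_simplex K f TYPE('k) \<rho>0) \<and>
                  (\<Delta>1 = \<rho>0 \<longrightarrow> {\<rho>0, \<sigma>b} \<subseteq> Delta_set K f n \<alpha> t \<and> birth_simplex K f TYPE('k) \<sigma>b)"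
    proof (intro allI impI)
      fix t assume "t \<in> {0<..(b - a) / 2} \<and> t > t0 \<and>
                ((\<lambda>x. real (card (Delta_set K f n \<alpha> x))) \<longlongrightarrow> real (card (Delta_set K f n \<alpha> t))) (at_right t0)"
      then have tt: "t > t0" by auto
      have "\<rho>0 \<in> Delta_set K f n \<alpha> t" using T(1,3) \<rho>0(2) tt by auto
      then show "(\<Delta>1 = \<sigma>b \<longrightarrow> {\<rho>0, \<sigma>b} \<subseteq> Delta_set K f n \<alpha> t \<and> terminal_simplex K f TYPE('k) \<rho>0) \<and>
                  (\<Delta>1 = \<rho>0 \<longrightarrow> {\<rho>0, \<sigma>b} \<subseteq> Delta_set K f n \<alpha> t \<and> birth_simplex K f TYPE('k) \<sigma>b)"
        using inD[OF tt] D1 r0(3) T(2) by auto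
    qed
    show ?thesis
      apply (rule exI[of _ \<rho>0], rule exI[of _ \<sigma>b])
      using sb(1) csb2 r0(1,2) eq D1 part2 tp by auto
  qed
qed

end
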